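(* The map $\phi_{s'} : \mathbf{ASM} \to \mathbb{K}(q)$ linearly defined, for any $s' \in \{\operatorname{se}, \operatorname{nw}, \operatorname{sw}, \operatorname{ne}\}$ and any ASM $\delta$ of size $n$ by $\phi_{s'}(\mathbf{F}_{M^\delta}) := \frac{q^{s'(\delta)}}{[n]_q!}$ is an algebra morphism.
   Context: Let $\mathbb{K}$ be a field of characteristic zero; $[n]_q := 1 + q + \dots + q^{n-1}$ and $[n]_q! := [1]_q \cdots [n]_q$, $[0]_q! := 1$. An alternating sign matrix (ASM) of size $n$ is an $n\times n$ matrix with entries in $\{0,+,-\}$ (read as $0,1,-1$) such that every row and column starts and ends (ignoring zeros) with $+$ and in each row and column the $+$ and $-$ alternate. For an ASM $\delta$, $M^\delta$ is the $\{0,1\}$-matrix with $M^\delta_{ij}=1$ iff $\delta_{ij}\ne0$. $\mathbf{PM}_1$ is the Hopf algebra with basis $(\mathbf{F}_M)$ indexed by $\{0,1\}$-square matrices with no null row or column, with product $\mathbf{F}_{M_1}\cdot\mathbf{F}_{M_2} = \sum \mathbf{F}_M$ over all $M$ obtained by shuffling the columns of $M_1$ (with an $n_2\times n_1$ zero block placed below) with the columns of $M_2$ (with an $n_1\times n_2$ zero block placed above), $n_i$ the sizes. $\mathbf{ASM}$ is the Hopf subalgebra of $\mathbf{PM}_1$ spanned by the $\mathbf{F}_{M^\delta}$, graded by the size of $\delta$. Each ASM is in bijection with a six-vertex configuration on the $n\times n$ grid with domain wall boundary conditions (horizontal boundary edges point inward, vertical boundary edges point outward); zero entries correspond to the four vertex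 types $\operatorname{ne}$ (vertical edges pointing up, horizontal edges pointing right), $\operatorname{nw}$ (up, left), $\operatorname{se}$ (down, right), $\operatorname{sw}$ (down, left), while $+$ and $-$ entries are the two other vertex types. Equivalently, for a zero entry $\delta_{ij}$, with $r = \sum_{j'<j}\delta_{ij'}$ and $c = \sum_{i'<i}\delta_{i'j}$ (both in $\{0,1\}$), its type is $\operatorname{ne}$ if $(r,c)=(0,0)$, $\operatorname{nw}$ if $(r,c)=(1,0)$, $\operatorname{se}$ if $(r,c)=(0,1)$, $\operatorname{sw}$ if $(r,c)=(1,1)$. For $s'$ among these types, $s'(\delta)$ is the number of vertices of type $s'$ in the configuration of $\delta$. *)

theory Defs
  imports "HOL-Computational_Algebra.Polynomial" "HOL-Computational_Algebra.Fraction_Field"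
begin

(* An n x n matrix is a function nat => nat => int, required to vanish outside {0..<n}^2.
   Entries +,-,0 are read as 1,-1,0. *)

definition alt_signs :: "int list \<Rightarrow> bool" where
  "alt_signs xs \<longleftrightarrow> odd (length xs) \<and>
     (\<forall>k<length xs. xs ! k = (if even k then 1 else -1))"

definition is_asm :: "nat \<Rightarrow> (nat \<Rightarrow> nat \<Rightarrow> int) \<Rightarrow> bool" where
  "is_asm n d \<longleftrightarrow>
     (\<forall>i j. d i j \<in> {-1, 0, 1}) \<and>
     (\<forall>i j. \<not> (i < n \<and> j < n) \<longrightarrow> d i j = 0) \<and>
     (\<forall>i<n. alt_signs (filter (\<lambda>x. x \<noteq> 0) (map (\<lambda>j. d i j) [0..<n]))) \<and>
     (\<forall>j<n. alt_signs (filter (\<lambda>x. x \<noteq> 0) (map (\<lambda>i. d i j) [0..<n])))"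

definition supp :: "nat \<Rightarrow> (nat \<Rightarrow> nat \<Rightarrow> int) \<Rightarrow> nat \<Rightarrow> nat \<Rightarrow> bool" where
  "supp n d i j \<longleftrightarrow> i < n \<and> j < n \<and> d i j \<noteq> 0"

datatype vtype = NE | NW | SE | SW

definition vtype_of :: "(nat \<Rightarrow> nat \<Rightarrow> int) \<Rightarrow> nat \<Rightarrow> nat \<Rightarrow> vtype" where
  "vtype_of d i j =
     (let r = (\<Sum>j'<j. d i j'); c = (\<Sum>i'<i. d i' j) in
      if r = 0 \<and> c = 0 then NE
      else if r = 1 \<and> c = 0 then NW
      else if r = 0 \<and> c = 1 then SE
      else SW)"

definition vcount :: "vtype \<Rightarrow> nat \<Rightarrow> (nat \<Rightarrow> nat \<Rightarrow> int) \<Rightarrow> nat" where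
  "vcount s n d = card {(i, j). i < n \<and> j < n \<and> d i j = 0 \<and> vtype_of d i j = s}"

definition asm_of :: "nat \<Rightarrow> (nat \<Rightarrow> nat \<Rightarrow> bool) \<Rightarrow> (nat \<Rightarrow> nat \<Rightarrow> int)" where
  "asm_of n M = (THE d. is_asm n d \<and> supp n d = M)"

definition qvar :: "'k::field_char_0 poly fract" where
  "qvar = Fract [:0, 1:] 1"

definition qint :: "nat \<Rightarrow> 'k::field_char_0 poly fract" where
  "qint n = (\<Sum>i<n. qvar ^ i)"

definition qfact :: "nat \<Rightarrow> 'k::field_char_0 poly fract" where
  "qfact n = (\<Prod>k\<in>{1..n}. qint k)"

(* phi_{s'} on the basis element F_M, M = M^delta, delta an ASM of size n *)
definition phi :: "vtype \<Rightarrow> nat \<Rightarrow> (nat \<Rightarrow> nat \<Rightarrow> bool) \<Rightarrow> 'k::field_char_0 poly fract" where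
  "phi s n M = qvar ^ vcount s n (asm_of n M) / qfact n"

(* Column shuffles: S \<subseteq> {0..<n1+n2}, card S = n1, are the positions of the columns of M1
   (padded below by an n2 x n1 zero block); the other positions receive the columns of M2
   (padded above by an n1 x n2 zero block), each family in its original order. *)
definition shuffle_sets :: "nat \<Rightarrow> nat \<Rightarrow> nat set set" where
  "shuffle_sets n1 n2 = {S. S \<subseteq> {0..<n1 + n2} \<and> card S = n1}"

definition shuffle_mat :: "nat \<Rightarrow> nat \<Rightarrow> nat set \<Rightarrow> (nat \<Rightarrow> nat \<Rightarrow> bool) \<Rightarrow>
    (nat \<Rightarrow> nat \<Rightarrow> bool) \<Rightarrow> nat \<Rightarrow> nat \<Rightarrow> bool" where
  "shuffle_mat n1 n2 S M1 M2 i k =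
     (i < n1 + n2 \<and> k < n1 + n2 \<and>
      (if k \<in> S then i < n1 \<and> M1 i (card {x\<in>S. x < k})
       else n1 \<le> i \<and> M2 (i - n1) (card {x. x < k \<and> x \<notin> S})))"

(* the empty matrix (size 0), i.e. the unit of the algebra *)
definition empty_mat :: "nat \<Rightarrow> nat \<Rightarrow> bool" where
  "empty_mat i j = False"

end

theory Submission
  imports Defs
begin

lemma altsum: "(\<Sum>k<(n::nat). if even k then 1 else -1 :: int) = (if odd n then 1 else 0)"
  by (induction n) auto

lemma alt_take_sum:
  assumes "alt_signs ys"
  shows "sum_list (take L ys) = (if odd (min L (length ys)) then 1 else 0)"
proof -
  have "sum_list (take L ys) = (\<Sum>k<min L (length ys). ys ! k)"
    by (simp add: sum_list_sum_nth atLeast0LessThan min.commute)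
  also have "\<dots> = (\<Sum>k<min L (length ys). if even k then 1 else -1)"
    using assms by (auto simp: alt_signs_def intro!: sum.cong)
  also have "\<dots> = (if odd (min L (length ys)) then 1 else 0)" by (rule altsum)
  finally show ?thesis .
qed

lemma alt_full_sum: "alt_signs ys \<Longrightarrow> sum_list ys = 1"
  using alt_take_sum[of ys "length ys"] by (simp add: alt_signs_def)

lemma filter_take_prefix:
  "filter P (take m xs) = take (length (filter P (take m xs))) (filter P xs)"
proof -
  have "filter P xs = filter P (take m xs) @ filter P (drop m xs)"
    by (metis append_take_drop_id filter_append)
  then show ?thesis by simp
qed

lemma sum_list_filter_nz: "sum_list (filter (\<lambda>x. x \<noteq> 0) xs) = sum_list (xs :: int list)"
  by (induction xs) auto

lemma filter_nth_idx:
  assumes "j < length xs" "P (xs ! j)"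
  shows "length (filter P (take j xs)) < length (filter P xs) \<and>
         filter P xs ! length (filter P (take j xs)) = xs ! j"
proof -
  have e: "xs = take j xs @ xs ! j # drop (Suc j) xs" using assms(1) by (simp add: id_take_nth_drop)
  have "filter P xs = filter P (take j xs) @ xs ! j # filter P (drop (Suc j) xs)"
    using assms(2) by (subst e) simp
  then show ?thesis by (simp add: nth_append)
qed

lemma asm_rows: "is_asm n d \<Longrightarrow> i < n \<Longrightarrow> alt_signs (filter (\<lambda>x. x \<noteq> 0) (map (\<lambda>j. d i j) [0..<n]))"
  unfolding is_asm_def by (elim conjE) (drule spec, erule mp)
lemma asm_cols: "is_asm n d \<Longrightarrow> j < n \<Longrightarrow> alt_signs (filter (\<lambda>x. x \<noteq> 0) (map (\<lambda>i. d i j) [0..<n]))"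
  unfolding is_asm_def by (elim conjE) (drule spec, erule mp)
lemma asm_out: "is_asm n d \<Longrightarrow> \<not> (i < n \<and> j < n) \<Longrightarrow> d i j = 0"
  unfolding is_asm_def by blast
lemma asm_vals: "is_asm n d \<Longrightarrow> d i j \<in> {-1,0,1}"
  unfolding is_asm_def by blast

definition transp_m :: "(nat \<Rightarrow> nat \<Rightarrow> int) \<Rightarrow> nat \<Rightarrow> nat \<Rightarrow> int" where
  "transp_m d i j = d j i"

lemma is_asm_transp: "is_asm n d \<Longrightarrow> is_asm n (transp_m d)"
  unfolding is_asm_def[of n "transp_m d"] transp_m_def
  apply (intro conjI allI impI)
  using asm_vals apply blast
  using asm_out apply blast
  using asm_cols apply blast
  using asm_rows apply blast
  done

lemma row_partial:
  assumes "is_asm n d"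
  shows "(\<Sum>j<m. d i j) \<in> {0, 1}"
proof (cases "i < n")
  case False
  then have "\<forall>j. d i j = 0" using assms asm_out by blast
  then show ?thesis by simp
next
  case True
  define m' where "m' = min m n"
  have "(\<Sum>j<m. d i j) = (\<Sum>j<m'. d i j)"
    by (rule sum.mono_neutral_right) (auto simp: m'_def min_def not_less intro!: asm_out[OF assms] split: if_splits)
  also have "\<dots> = sum_list (take m' (map (d i) [0..<n]))"
  proof -
    have "take m' (map (d i) [0..<n]) = map (d i) [0..<m']" by (simp add: m'_def take_map)
    then show ?thesis by (simp add: sum_set_upt_conv_sum_list_nat[symmetric] atLeast0LessThan)
  qed
  also have "\<dots> = sum_list (filter (\<lambda>x. x \<noteq> 0) (take m' (map (d i) [0..<n])))"
    by (simp only: sum_list_filter_nz)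
  also have "\<dots> \<in> {0,1}"
  proof -
    have al: "alt_signs (filter (\<lambda>x. x \<noteq> 0) (map (d i) [0..<n]))"
      using asm_rows[OF assms True] by simp
    show ?thesis by (subst filter_take_prefix) (simp only: alt_take_sum[OF al], simp)
  qed
  finally show ?thesis .
qed

lemma row_full:
  assumes "is_asm n d" "i < n"
  shows "(\<Sum>j<n. d i j) = 1"
proof -
  have "(\<Sum>j<n. d i j) = sum_list (map (d i) [0..<n])"
    by (simp add: sum_set_upt_conv_sum_list_nat[symmetric] atLeast0LessThan)
  also have "\<dots> = sum_list (filter (\<lambda>x. x \<noteq> 0) (map (d i) [0..<n]))"
    by (simp add: sum_list_filter_nz)
  also have "\<dots> = 1" using asm_rows[OF assms] by (intro alt_full_sum) simp
  finally show ?thesis .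
qed

lemma col_partial: "is_asm n d \<Longrightarrow> (\<Sum>i<m. d i j) \<in> {0, 1}"
  using row_partial[OF is_asm_transp, where m=m and i=j] by (simp add: transp_m_def)

lemma col_full: "is_asm n d \<Longrightarrow> j < n \<Longrightarrow> (\<Sum>i<n. d i j) = 1"
  using row_full[OF is_asm_transp, where i=j] by (simp add: transp_m_def)

lemma asm_unique:
  assumes "is_asm n d" "is_asm n d'" "supp n d = supp n d'"
  shows "d = d'"
proof (intro ext)
  fix i j
  show "d i j = d' i j"
  proof (cases "i < n \<and> j < n")
    case False then show ?thesis using assms asm_out by metis
  next
    case True
    have s: "\<And>j. j < n \<Longrightarrow> (d i j = 0) = (d' i j = 0)"
      using assms(3) True unfolding supp_def by (metis)
    show ?thesis
    proof (cases "d i j = 0")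
      case True then show ?thesis using s \<open>i<n \<and> j<n\<close> by auto
    next
      case nz: False
      define P where "P = (\<lambda>x::int. x \<noteq> 0)"
      define xs where "xs = map (d i) [0..<n]"
      define xs' where "xs' = map (d' i) [0..<n]"
      have nz': "d' i j \<noteq> 0" using s nz True by auto
      have L: "length (filter P (take j xs)) = length (filter P (take j xs'))"
      proof -
        have "filter P (take j xs) = map (d i) (filter (P \<circ> d i) (take j [0..<n]))"
          by (simp add: xs_def take_map filter_map)
        moreover have "filter P (take j xs') = map (d' i) (filter (P \<circ> d' i) (take j [0..<n]))"
          by (simp add: xs'_def take_map filter_map)
        moreover have "filter (P \<circ> d i) (take j [0..<n]) = filter (P \<circ> d' i) (take j [0..<n])"
          by (rule filter_cong) (auto simp: P_def s dest!: in_set_takeD)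
        ultimately show ?thesis by simp
      qed
      have a1: "alt_signs (filter P xs)" using asm_rows[OF assms(1)] True by (simp add: P_def xs_def)
      have a2: "alt_signs (filter P xs')" using asm_rows[OF assms(2)] True by (simp add: P_def xs'_def)
      have j1: "j < length xs" "P (xs ! j)" using True nz by (simp_all add: xs_def P_def)
      have j2: "j < length xs'" "P (xs' ! j)" using True nz' by (simp_all add: xs'_def P_def)
      note f1 = filter_nth_idx[of j xs P, OF j1]
      note f2 = filter_nth_idx[of j xs' P, OF j2]
      have "xs ! j = (if even (length (filter P (take j xs))) then 1 else -1)"
        using f1 a1 unfolding alt_signs_def by (auto simp del: length_filter_less)
      then have "d i j = (if even (length (filter P (take j xs))) then 1 else -1)"
        using True by (simp add: xs_def)
      moreover have "xs' ! j = (if even (length (filter P (take j xs'))) then 1 else -1)"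
        using f2 a2 unfolding alt_signs_def by (auto simp del: length_filter_less)
      then have "d' i j = (if even (length (filter P (take j xs'))) then 1 else -1)"
        using True by (simp add: xs'_def)
      ultimately show ?thesis using L by simp
    qed
  qed
qed

lemma asm_of_supp: "is_asm n d \<Longrightarrow> asm_of n (supp n d) = d"
  unfolding asm_of_def by (rule the_equality) (auto intro: asm_unique)


definition rk :: "nat set \<Rightarrow> nat \<Rightarrow> nat" where "rk T k = card {x\<in>T. x < k}"

lemma rk_Suc: "rk T (Suc k) = rk T k + (if k \<in> T then 1 else 0)"
proof (cases "k \<in> T")
  case True
  then have "{x\<in>T. x < Suc k} = insert k {x\<in>T. x < k}" by auto
  then show ?thesis using True by (simp add: rk_def)
next
  case False
  then have "{x\<in>T. x < Suc k} = {x\<in>T. x < k}" using less_Suc_eq by auto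
  then show ?thesis using False by (simp add: rk_def)
qed

lemma rk_0[simp]: "rk T 0 = 0" by (simp add: rk_def)

lemma rk_mono: "k \<le> k' \<Longrightarrow> rk T k \<le> rk T k'"
  unfolding rk_def by (rule card_mono) auto

lemma rk_less: "k \<in> T \<Longrightarrow> k < k' \<Longrightarrow> rk T k < rk T k'"
  using rk_Suc[of T k] rk_mono[of "Suc k" k' T] by simp

lemma rk_full: "T \<subseteq> {..<N} \<Longrightarrow> rk T N = card T"
  unfolding rk_def by (rule arg_cong[where f=card]) auto

lemma rk_compl_full: "S \<subseteq> {..<N} \<Longrightarrow> rk (-S) N = N - card S"
proof -
  assume a: "S \<subseteq> {..<N}"
  have "{x\<in>-S. x < N} = {..<N} - S" by auto
  then show ?thesis using a by (simp add: rk_def card_Diff_subset finite_subset)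
qed

lemma rk_le_card: "finite T \<Longrightarrow> rk T k \<le> card T"
  unfolding rk_def by (rule card_mono) auto

lemma rk_reindex: "(\<Sum>j<k. if j \<in> T then f (rk T j) else 0) = (\<Sum>j<rk T k. f j)"
  by (induction k) (auto simp: rk_Suc)

lemma rk_map: "map (rk T) (filter (\<lambda>x. x \<in> T) [0..<N]) = [0..<rk T N]"
  by (induction N) (auto simp: rk_Suc)

lemma rk_count: "(\<Sum>j<k. if j \<in> T then 1 else 0 :: nat) = rk T k"
  by (induction k) (auto simp: rk_Suc)

definition X :: "vtype \<Rightarrow> nat \<Rightarrow> nat \<Rightarrow> nat" where
  "X s n1 m = (if s = NE then n1 - m else if s = NW then m else 0)"
definition Y :: "vtype \<Rightarrow> nat \<Rightarrow> nat \<Rightarrow> nat" where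
  "Y s n2 m = (if s = SE then n2 - m else if s = SW then m else 0)"
definition stat :: "vtype \<Rightarrow> nat \<Rightarrow> nat \<Rightarrow> nat set \<Rightarrow> nat" where
  "stat s n1 n2 S = (\<Sum>k<n1+n2. if k \<in> S then Y s n2 (rk (-S) k) else X s n1 (rk S k))"
definition alpha :: "vtype \<Rightarrow> nat \<Rightarrow> nat" where "alpha s n2 = (if s = NE \<or> s = SW then n2 else 0)"
definition beta :: "vtype \<Rightarrow> nat \<Rightarrow> nat" where "beta s n1 = (if s = NW \<or> s = SE then n1 else 0)"

lemma stat_ins:
  assumes S: "S \<subseteq> {..<n1+n2}" "card S = n1"
  shows "stat s (Suc n1) n2 (insert (n1+n2) S) = alpha s n2 + stat s n1 n2 S"
proof -
  define m where "m = n1 + n2"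
  define S1 where "S1 = insert m S"
  have fin: "finite S" using S finite_subset by blast
  have rks: "\<And>k. k \<le> m \<Longrightarrow> rk S1 k = rk S k \<and> rk (-S1) k = rk (-S) k"
    unfolding rk_def S1_def by (intro conjI arg_cong[where f=card]) auto
  have rkm: "rk (-S) m = n2" using rk_compl_full[OF S(1)] S by (simp add: m_def)
  have term_m: "(if m \<in> S1 then Y s n2 (rk (-S1) m) else X s (Suc n1) (rk S1 m)) = (if s = SW then n2 else 0)"
    using rks[of m] rkm by (simp add: S1_def Y_def)
  have termk: "\<And>k. k < m \<Longrightarrow> (if k \<in> S1 then Y s n2 (rk (-S1) k) else X s (Suc n1) (rk S1 k))
     = (if k \<in> S then Y s n2 (rk (-S) k) else X s n1 (rk S k)) + (if s = NE then (if k \<in> -S then 1 else 0) else 0)"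
  proof -
    fix k assume k: "k < m"
    have "rk S k \<le> n1" using rk_le_card[OF fin] S by metis
    then show "?thesis k" using rks[of k] k by (auto simp: S1_def X_def)
  qed
  define F where "F = (\<lambda>k. if k \<in> S1 then Y s n2 (rk (-S1) k) else X s (Suc n1) (rk S1 k))"
  have "stat s (Suc n1) n2 S1 = (\<Sum>k<Suc m. F k)" by (simp add: stat_def m_def F_def)
  also have "\<dots> = (\<Sum>k<m. F k) + F m" by (rule sum.lessThan_Suc)
  also have "\<dots> = (\<Sum>k<m. if k \<in> S1 then Y s n2 (rk (-S1) k) else X s (Suc n1) (rk S1 k)) + (if s = SW then n2 else 0)"
    using term_m by (simp only: F_def)
  also have "\<dots> = (\<Sum>k<m. (if k \<in> S then Y s n2 (rk (-S) k) else X s n1 (rk S k)) + (if s = NE then (if k \<in> -S then 1 else 0) else 0)) + (if s = SW then n2 else 0)"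
    using termk by simp
  also have "\<dots> = stat s n1 n2 S + (if s = NE then rk (-S) m else 0) + (if s = SW then n2 else 0)"
    using rk_count[where T="-S" and k=m] by (simp add: sum.distrib stat_def m_def)
  also have "\<dots> = alpha s n2 + stat s n1 n2 S" using rkm by (auto simp: alpha_def)
  finally show ?thesis by (simp add: S1_def m_def)
qed

lemma stat_noins:
  assumes S: "S \<subseteq> {..<n1+n2}" "card S = n1"
  shows "stat s n1 (Suc n2) S = beta s n1 + stat s n1 n2 S"
proof -
  define m where "m = n1 + n2"
  have fin: "finite S" using S finite_subset by blast
  have rkm: "rk (-S) m = n2" using rk_compl_full[OF S(1)] S by (simp add: m_def)
  have rkm2: "rk S m = n1" using rk_full[OF S(1)] S by (simp add: m_def)
  have mS: "m \<notin> S" using S by (auto simp: m_def)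
  have term_m: "(if m \<in> S then Y s (Suc n2) (rk (-S) m) else X s n1 (rk S m)) = (if s = NW then n1 else 0)"
    using mS rkm2 by (simp add: X_def)
  have termk: "\<And>k. k < m \<Longrightarrow> (if k \<in> S then Y s (Suc n2) (rk (-S) k) else X s n1 (rk S k))
     = (if k \<in> S then Y s n2 (rk (-S) k) else X s n1 (rk S k)) + (if s = SE then (if k \<in> S then 1 else 0) else 0)"
  proof -
    fix k assume k: "k < m"
    have "rk (-S) k \<le> n2" using rk_mono[of k m "-S"] k rkm by simp
    then show "?thesis k" using k by (auto simp: Y_def)
  qed
  define F where "F = (\<lambda>k. if k \<in> S then Y s (Suc n2) (rk (-S) k) else X s n1 (rk S k))"
  have "stat s n1 (Suc n2) S = (\<Sum>k<Suc m. F k)" by (simp add: stat_def m_def F_def)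
  also have "\<dots> = (\<Sum>k<m. F k) + F m" by (rule sum.lessThan_Suc)
  also have "\<dots> = (\<Sum>k<m. if k \<in> S then Y s (Suc n2) (rk (-S) k) else X s n1 (rk S k)) + (if s = NW then n1 else 0)"
    using term_m by (simp only: F_def)
  also have "\<dots> = (\<Sum>k<m. (if k \<in> S then Y s n2 (rk (-S) k) else X s n1 (rk S k)) + (if s = SE then (if k \<in> S then 1 else 0) else 0)) + (if s = NW then n1 else 0)"
    using termk by simp
  also have "\<dots> = stat s n1 n2 S + (if s = SE then rk S m else 0) + (if s = NW then n1 else 0)"
    by (simp add: sum.distrib stat_def m_def rk_count)
  also have "\<dots> = beta s n1 + stat s n1 n2 S" using rkm2 by (auto simp: beta_def)
  finally show ?thesis .
qed

lemma qint_Suc: "qint (Suc n) = qint n + qvar ^ n"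
  by (simp add: qint_def)

lemma qint_add: "qint (a + b) = qint a + qvar ^ a * qint b"
  by (induction b) (simp_all add: qint_Suc algebra_simps power_add, simp add: qint_def)

lemma qfact_Suc: "qfact (Suc n) = qfact n * qint (Suc n)"
  by (simp add: qfact_def prod.cl_ivl_Suc)

lemma qvar_pow: "(qvar :: 'k::field_char_0 poly fract) ^ i = Fract ([:0,1:] ^ i) 1"
  by (induction i) (simp_all add: qvar_def One_fract_def)

lemma qint_fract: "(qint k :: 'k::field_char_0 poly fract) = Fract (\<Sum>i<k. [:0,1:] ^ i) 1"
  by (induction k) (simp_all add: qint_def qvar_pow Zero_fract_def)

lemma qint_nz: "k \<ge> 1 \<Longrightarrow> (qint k :: 'k::field_char_0 poly fract) \<noteq> 0"
proof
  assume k: "k \<ge> 1" and z: "(qint k :: 'k poly fract) = 0"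
  have "Fract (\<Sum>i<k. [:0,1:] ^ i :: 'k poly) 1 = Fract 0 1"
    using z by (simp add: qint_fract Zero_fract_def)
  then have p: "(\<Sum>i<k. [:0,1:] ^ i :: 'k poly) = 0" by (simp add: eq_fract)
  have "poly (\<Sum>i<k. [:0,1:] ^ i :: 'k poly) 0 = (\<Sum>i<k. (0::'k) ^ i)"
    by (simp add: poly_sum)
  also have "\<dots> = 1" using k
    by (induction k) (auto simp: power_0_left)
  finally show False using p by simp
qed

lemma qfact_nz: "(qfact n :: 'k::field_char_0 poly fract) \<noteq> 0"
  by (induction n) (simp_all add: qfact_Suc qint_nz, simp add: qfact_def)

lemma qbinom:
  fixes g :: "nat \<Rightarrow> nat \<Rightarrow> 'k::field_char_0 poly fract"
  assumes g0: "\<And>n2. g 0 n2 = 1"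
    and g1: "\<And>n1. g (Suc n1) 0 = g n1 0"
    and g2: "\<And>n1 n2. g (Suc n1) (Suc n2) = qvar ^ alpha s (Suc n2) * g n1 (Suc n2) + qvar ^ beta s (Suc n1) * g (Suc n1) n2"
  shows "g n1 n2 * qfact n1 * qfact n2 = qfact (n1 + n2)"
proof -
  have gz: "\<And>n1. g n1 0 = 1" by (induct_tac n1) (simp_all add: g0 g1)
  have qq: "\<And>a b. (qvar :: 'k poly fract) ^ alpha s b * qint a + qvar ^ beta s a * qint b = qint (a + b)"
  proof -
    fix a b
    have A1: "(qint (a+b) :: 'k poly fract) = qint a + qvar^a * qint b" by (rule qint_add)
    have A2: "(qint (a+b) :: 'k poly fract) = qint b + qvar^b * qint a" using qint_add[of b a] by (simp add: add.commute)
    consider "alpha s b = b \<and> beta s a = 0" | "alpha s b = 0 \<and> beta s a = a"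
      by (cases s) (auto simp: alpha_def beta_def)
    then show "(qvar :: 'k poly fract) ^ alpha s b * qint a + qvar ^ beta s a * qint b = qint (a + b)"
    proof cases
      case 1 then show ?thesis using A2 by (simp add: add.commute)
    next
      case 2 then show ?thesis using A1 by simp
    qed
  qed
  show ?thesis
  proof (induction n1 arbitrary: n2)
    case 0 then show ?case by (simp add: g0 qfact_def)
  next
    case (Suc n1)
    note outer = Suc.IH
    show ?case
    proof (induction n2)
      case 0 then show ?case by (simp add: gz qfact_def)
    next
      case (Suc n2)
      define M where "M = n1 + Suc n2"
      have e1: "g n1 (Suc n2) * qfact n1 * qfact (Suc n2) = qfact M" using outer[of "Suc n2"] M_def by simp
      have e2: "g (Suc n1) n2 * qfact (Suc n1) * qfact n2 = qfact M" using Suc.IH M_def by simp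
      have "g (Suc n1) (Suc n2) * qfact (Suc n1) * qfact (Suc n2)
          = qvar ^ alpha s (Suc n2) * qint (Suc n1) * (g n1 (Suc n2) * qfact n1 * qfact (Suc n2))
            + qvar ^ beta s (Suc n1) * qint (Suc n2) * (g (Suc n1) n2 * qfact (Suc n1) * qfact n2)"
        by (simp add: g2 qfact_Suc[of n1] qfact_Suc[of n2] algebra_simps)
      also have "\<dots> = qfact M * (qvar ^ alpha s (Suc n2) * qint (Suc n1) + qvar ^ beta s (Suc n1) * qint (Suc n2))"
        using e1 e2 by (simp add: algebra_simps)
      also have "\<dots> = qfact M * qint (Suc M)" using qq[where a="Suc n1" and b="Suc n2"] by (simp add: M_def)
      also have "\<dots> = qfact (Suc n1 + Suc n2)" by (simp add: qfact_Suc M_def)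
      finally show ?case .
    qed
  qed
qed

lemma ss_0: "shuffle_sets 0 n2 = {{}}"
  unfolding shuffle_sets_def by (auto dest: finite_subset)

lemma ss_Suc: "shuffle_sets (Suc n1) n2 =
   insert (n1+n2) ` shuffle_sets n1 n2 \<union> {S. S \<subseteq> {0..<n1+n2} \<and> card S = Suc n1}"
  (is "?L = ?A \<union> ?B")
proof
  show "?L \<subseteq> ?A \<union> ?B"
  proof
    fix S assume S: "S \<in> ?L"
    then have fin: "finite S" by (auto simp: shuffle_sets_def dest: finite_subset)
    show "S \<in> ?A \<union> ?B"
    proof (cases "n1 + n2 \<in> S")
      case True
      then have "S = insert (n1+n2) (S - {n1+n2})" by auto
      moreover have "S - {n1+n2} \<in> shuffle_sets n1 n2"
        using S True fin by (auto simp: shuffle_sets_def)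
      ultimately show ?thesis by blast
    next
      case False
      have "S \<subseteq> {0..<n1+n2}"
      proof
        fix x assume "x \<in> S" with S False show "x \<in> {0..<n1+n2}"
          by (auto simp: shuffle_sets_def less_Suc_eq)
      qed
      then show ?thesis using S by (auto simp: shuffle_sets_def)
    qed
  qed
next
  show "?A \<union> ?B \<subseteq> ?L"
  proof
    fix S assume "S \<in> ?A \<union> ?B"
    then show "S \<in> ?L"
    proof
      assume "S \<in> ?A"
      then obtain T where T: "T \<in> shuffle_sets n1 n2" "S = insert (n1+n2) T" by blast
      then have "finite T" "n1 + n2 \<notin> T" by (auto simp: shuffle_sets_def dest: finite_subset)
      then show ?thesis using T by (auto simp: shuffle_sets_def)
    next
      assume "S \<in> ?B" then show ?thesis by (auto simp: shuffle_sets_def)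
    qed
  qed
qed

lemma ss_fin: "finite (shuffle_sets n1 n2)"
  unfolding shuffle_sets_def by (rule finite_subset[of _ "Pow {0..<n1+n2}"]) auto

definition gsum :: "vtype \<Rightarrow> nat \<Rightarrow> nat \<Rightarrow> 'k::field_char_0 poly fract" where
  "gsum s n1 n2 = (\<Sum>S\<in>shuffle_sets n1 n2. qvar ^ stat s n1 n2 S)"

lemma gsum_rec:
  "(gsum s (Suc n1) n2 :: 'k::field_char_0 poly fract) = qvar ^ alpha s n2 * gsum s n1 n2 +
     (\<Sum>S\<in>{S. S \<subseteq> {0..<n1+n2} \<and> card S = Suc n1}. qvar ^ stat s (Suc n1) n2 S)"
proof -
  let ?A = "insert (n1+n2) ` shuffle_sets n1 n2"
  let ?B = "{S. S \<subseteq> {0..<n1+n2} \<and> card S = Suc n1}"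
  have finA: "finite ?A" using ss_fin by blast
  have finB: "finite ?B" by (rule finite_subset[of _ "Pow {0..<n1+n2}"]) auto
  have disj: "?A \<inter> ?B = {}" by auto
  have inj: "inj_on (insert (n1+n2)) (shuffle_sets n1 n2)"
  proof (rule inj_onI)
    fix x y assume xy: "x \<in> shuffle_sets n1 n2" "y \<in> shuffle_sets n1 n2" "insert (n1+n2) x = insert (n1+n2) y"
    have "n1+n2 \<notin> x" "n1+n2 \<notin> y" using xy(1,2) unfolding shuffle_sets_def by auto
    then show "x = y" using xy(3) insert_ident by metis
  qed
  have "(gsum s (Suc n1) n2 :: 'k poly fract) = (\<Sum>S\<in>?A. qvar ^ stat s (Suc n1) n2 S) + (\<Sum>S\<in>?B. qvar ^ stat s (Suc n1) n2 S)"
    unfolding gsum_def ss_Suc by (rule sum.union_disjoint[OF finA finB disj])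
  also have "(\<Sum>S\<in>?A. (qvar :: 'k poly fract) ^ stat s (Suc n1) n2 S) = (\<Sum>S\<in>shuffle_sets n1 n2. qvar ^ stat s (Suc n1) n2 (insert (n1+n2) S))"
    by (rule sum.reindex[OF inj, unfolded comp_def])
  also have "\<dots> = (\<Sum>S\<in>shuffle_sets n1 n2. qvar ^ alpha s n2 * qvar ^ stat s n1 n2 S)"
  proof (rule sum.cong[OF refl])
    fix S assume "S \<in> shuffle_sets n1 n2"
    then have "S \<subseteq> {..<n1+n2}" "card S = n1" by (auto simp: shuffle_sets_def)
    then show "(qvar :: 'k poly fract) ^ stat s (Suc n1) n2 (insert (n1+n2) S) = qvar ^ alpha s n2 * qvar ^ stat s n1 n2 S"
      by (simp add: stat_ins power_add)
  qed
  finally show ?thesis by (simp add: gsum_def sum_distrib_left)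
qed

lemma gsum_formula: "(gsum s n1 n2 :: 'k::field_char_0 poly fract) * qfact n1 * qfact n2 = qfact (n1 + n2)"
proof (rule qbinom[where g = "gsum s"])
  fix n2
  show "(gsum s 0 n2 :: 'k poly fract) = 1"
    by (simp add: gsum_def ss_0 stat_def X_def rk_def)
next
  fix n1
  have E: "{S. S \<subseteq> {0..<n1+0} \<and> card S = Suc n1} = {}"
  proof (rule ccontr)
    assume "{S. S \<subseteq> {0..<n1+0} \<and> card S = Suc n1} \<noteq> {}"
    then obtain S where "S \<subseteq> {0..<n1}" "card S = Suc n1" by auto
    then show False using card_mono[of "{0..<n1}" S] by simp
  qed
  have "(gsum s (Suc n1) 0 :: 'k poly fract) = qvar ^ alpha s 0 * gsum s n1 0 +
     (\<Sum>S\<in>{S. S \<subseteq> {0..<n1+0} \<and> card S = Suc n1}. qvar ^ stat s (Suc n1) 0 S)"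
    by (rule gsum_rec)
  also have "(\<Sum>S\<in>{S. S \<subseteq> {0..<n1+0} \<and> card S = Suc n1}. (qvar :: 'k poly fract) ^ stat s (Suc n1) 0 S) = 0"
    unfolding E by simp
  finally show "(gsum s (Suc n1) 0 :: 'k poly fract) = gsum s n1 0" by (simp add: alpha_def)
next
  fix n1 n2
  have Bs: "(\<Sum>S\<in>{S. S \<subseteq> {0..<n1 + Suc n2} \<and> card S = Suc n1}. qvar ^ stat s (Suc n1) (Suc n2) S)
     = (\<Sum>S\<in>shuffle_sets (Suc n1) n2. (qvar :: 'k poly fract) ^ beta s (Suc n1) * qvar ^ stat s (Suc n1) n2 S)"
  proof (rule sum.cong)
    show "{S. S \<subseteq> {0..<n1 + Suc n2} \<and> card S = Suc n1} = shuffle_sets (Suc n1) n2"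
      by (simp add: shuffle_sets_def)
  next
    fix S assume "S \<in> shuffle_sets (Suc n1) n2"
    then have "S \<subseteq> {..<Suc n1+n2}" "card S = Suc n1" by (auto simp: shuffle_sets_def)
    then show "(qvar :: 'k poly fract) ^ stat s (Suc n1) (Suc n2) S = qvar ^ beta s (Suc n1) * qvar ^ stat s (Suc n1) n2 S"
      by (simp add: stat_noins power_add)
  qed
  have "(gsum s (Suc n1) (Suc n2) :: 'k poly fract) = qvar ^ alpha s (Suc n2) * gsum s n1 (Suc n2) +
     (\<Sum>S\<in>{S. S \<subseteq> {0..<n1 + Suc n2} \<and> card S = Suc n1}. qvar ^ stat s (Suc n1) (Suc n2) S)"
    by (rule gsum_rec)
  also note Bs
  also have "(\<Sum>S\<in>shuffle_sets (Suc n1) n2. (qvar :: 'k poly fract) ^ beta s (Suc n1) * qvar ^ stat s (Suc n1) n2 S)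
     = qvar ^ beta s (Suc n1) * gsum s (Suc n1) n2"
    by (simp add: gsum_def sum_distrib_left)
  finally show "(gsum s (Suc n1) (Suc n2) :: 'k poly fract) = qvar ^ alpha s (Suc n2) * gsum s n1 (Suc n2) + qvar ^ beta s (Suc n1) * gsum s (Suc n1) n2" .
qed


definition shD :: "nat \<Rightarrow> nat \<Rightarrow> nat set \<Rightarrow> (nat \<Rightarrow> nat \<Rightarrow> int) \<Rightarrow> (nat \<Rightarrow> nat \<Rightarrow> int) \<Rightarrow> nat \<Rightarrow> nat \<Rightarrow> int" where
  "shD n1 n2 S d1 d2 i k = (if i < n1+n2 \<and> k < n1+n2 then
     (if k \<in> S then (if i < n1 then d1 i (rk S k) else 0)
      else (if n1 \<le> i then d2 (i-n1) (rk (-S) k) else 0)) else 0)"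

definition vt :: "int \<Rightarrow> int \<Rightarrow> vtype" where
  "vt r c = (if r = 0 \<and> c = 0 then NE else if r = 1 \<and> c = 0 then NW else if r = 0 \<and> c = 1 then SE else SW)"

lemma vt_eq: "vtype_of d i j = vt (\<Sum>j'<j. d i j') (\<Sum>i'<i. d i' j)"
  by (simp add: vtype_of_def Let_def vt_def)

definition ind :: "vtype \<Rightarrow> (nat \<Rightarrow> nat \<Rightarrow> int) \<Rightarrow> nat \<Rightarrow> nat \<Rightarrow> nat" where
  "ind s d i j = (if d i j = 0 \<and> vtype_of d i j = s then 1 else 0)"

lemma card_filter_sum: "finite A \<Longrightarrow> card {x\<in>A. P x} = (\<Sum>x\<in>A. if P x then 1 else 0)"
  by (simp add: sum.inter_filter[symmetric])

lemma card_filter_sum2: "card {j. j < n \<and> P j} = (\<Sum>j<(n::nat). if P j then 1 else 0)"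
proof -
  have "{j. j < n \<and> P j} = {j\<in>{..<n}. P j}" by auto
  then show ?thesis using card_filter_sum[of "{..<n}" P] by simp
qed

lemma vcount_sum: "vcount s n d = (\<Sum>i<n. \<Sum>j<n. ind s d i j)"
proof -
  have "{(i, j). i < n \<and> j < n \<and> d i j = 0 \<and> vtype_of d i j = s}
      = (SIGMA i:{..<n}. {j\<in>{..<n}. d i j = 0 \<and> vtype_of d i j = s})" by auto
  then have "vcount s n d = (\<Sum>i<n. card {j\<in>{..<n}. d i j = 0 \<and> vtype_of d i j = s})"
    by (simp add: vcount_def)
  also have "\<dots> = (\<Sum>i<n. \<Sum>j<n. ind s d i j)"
    by (rule sum.cong) (simp_all add: card_filter_sum2 ind_def)
  finally show ?thesis .
qed

lemma sum_split_add: "(\<Sum>i<a+(b::nat). f i) = (\<Sum>i<a. f i) + (\<Sum>t<b. f (a+t))"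
  by (induction b) (simp_all add: add.assoc)

lemma filter_zero_out:
  assumes "\<forall>x\<in>set xs. x \<notin> T \<longrightarrow> g x = (0::int)"
  shows "filter (\<lambda>x. x \<noteq> 0) (map g xs) = filter (\<lambda>x. x \<noteq> 0) (map g (filter (\<lambda>x. x \<in> T) xs))"
  using assms by (induction xs) auto

definition E1 :: "vtype \<Rightarrow> int \<Rightarrow> nat" where
  "E1 s p = (if (s = NE \<and> p = 0) \<or> (s = NW \<and> p = 1) then 1 else 0)"
definition E2 :: "vtype \<Rightarrow> int \<Rightarrow> nat" where
  "E2 s p = (if (s = SE \<and> p = 0) \<or> (s = SW \<and> p = 1) then 1 else 0)"

lemma cnt:
  assumes "is_asm n d" "m \<le> n"
  shows "(\<Sum>i<n. if (\<Sum>j<m. d i j) = 1 then 1 else 0 :: nat) = m"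
    and "(\<Sum>i<n. if (\<Sum>j<m. d i j) = 0 then 1 else 0 :: nat) = n - m"
proof -
  define p where "p i = (\<Sum>j<m. d i j)" for i
  have p01: "p i \<in> {0,1}" for i using row_partial[OF assms(1)] by (simp add: p_def)
  have "(\<Sum>i<n. p i) = (\<Sum>j<m. \<Sum>i<n. d i j)" unfolding p_def by (rule sum.swap)
  also have "\<dots> = (\<Sum>j<m. 1)" using assms by (intro sum.cong) (auto intro: col_full)
  finally have ps: "(\<Sum>i<n. p i) = int m" by simp
  have p01': "p i = 0 \<or> p i = 1" for i using p01[of i] by auto
  have pt1: "(if p i = 1 then 1 else 0 :: int) = p i" for i using p01'[of i] by auto
  have pt0: "(if p i = 0 then 1 else 0 :: nat) + (if p i = 1 then 1 else 0) = 1" for i using p01'[of i] by auto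
  have "int (\<Sum>i<n. if p i = 1 then 1 else 0 :: nat) = (\<Sum>i<n. (if p i = 1 then 1 else 0 :: int))"
    unfolding of_nat_sum by (intro sum.cong refl) simp
  also have "\<dots> = (\<Sum>i<n. p i)" by (simp only: pt1)
  finally have "int (\<Sum>i<n. if p i = 1 then 1 else 0 :: nat) = (\<Sum>i<n. p i)" .
  then have c1: "(\<Sum>i<n. if p i = 1 then 1 else 0 :: nat) = m" using ps of_nat_eq_iff by metis
  have "(\<Sum>i<n. if p i = 0 then 1 else 0 :: nat) + (\<Sum>i<n. if p i = 1 then 1 else 0 :: nat) = (\<Sum>i<n. 1)"
    by (simp only: sum.distrib[symmetric] pt0)
  then have c0: "(\<Sum>i<n. if p i = 0 then 1 else 0 :: nat) = n - m" using c1 by simp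
  show "(\<Sum>i<n. if (\<Sum>j<m. d i j) = 1 then 1 else 0 :: nat) = m" using c1 by (simp add: p_def)
  show "(\<Sum>i<n. if (\<Sum>j<m. d i j) = 0 then 1 else 0 :: nat) = n - m" using c0 by (simp add: p_def)
qed

lemma E1sum: "is_asm n d \<Longrightarrow> m \<le> n \<Longrightarrow> (\<Sum>i<n. E1 s (\<Sum>j<m. d i j)) = X s n m"
  using cnt[of n d m] by (cases s) (simp_all add: E1_def X_def)

lemma E2sum: "is_asm n d \<Longrightarrow> m \<le> n \<Longrightarrow> (\<Sum>i<n. E2 s (\<Sum>j<m. d i j)) = Y s n m"
  using cnt[of n d m] by (cases s) (simp_all add: E2_def Y_def)


context
  fixes n1 n2 :: nat and S :: "nat set" and d1 d2 :: "nat \<Rightarrow> nat \<Rightarrow> int"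
  assumes SS: "S \<in> shuffle_sets n1 n2" and A1: "is_asm n1 d1" and A2: "is_asm n2 d2"
begin

abbreviation "N \<equiv> n1 + n2"
abbreviation "DD \<equiv> shD n1 n2 S d1 d2"

lemma Ssub: "S \<subseteq> {..<N}" using SS by (auto simp: shuffle_sets_def)
lemma Scard: "card S = n1" using SS by (auto simp: shuffle_sets_def)
lemma rkSN: "rk S N = n1" using rk_full[OF Ssub] Scard by simp
lemma rkCN: "rk (-S) N = n2" using rk_compl_full[OF Ssub] Scard by simp
lemma rkS_lt: "k \<in> S \<Longrightarrow> rk S k < n1"
  using rk_less[of k S N] Ssub rkSN by auto
lemma rkC_lt: "k < N \<Longrightarrow> k \<notin> S \<Longrightarrow> rk (-S) k < n2"
  using rk_less[of k "-S" N] rkCN by auto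
lemma rkS_le: "rk S k \<le> n1"
  using rk_le_card[of S k] Ssub Scard finite_subset by blast
lemma rkC_le: "k \<le> N \<Longrightarrow> rk (-S) k \<le> n2"
  using rk_mono[of k N "-S"] rkCN by simp

lemma D1: "i < n1 \<Longrightarrow> j < N \<Longrightarrow> DD i j = (if j \<in> S then d1 i (rk S j) else 0)"
  by (simp add: shD_def)
lemma D2: "i2 < n2 \<Longrightarrow> j < N \<Longrightarrow> DD (n1+i2) j = (if j \<in> S then 0 else d2 i2 (rk (-S) j))"
  by (simp add: shD_def)

lemma r1: "i < n1 \<Longrightarrow> k \<le> N \<Longrightarrow> (\<Sum>j<k. DD i j) = (\<Sum>j<rk S k. d1 i j)"
proof -
  assume a: "i < n1" "k \<le> N"
  have "(\<Sum>j<k. DD i j) = (\<Sum>j<k. if j \<in> S then d1 i (rk S j) else 0)"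
    using a by (intro sum.cong) (auto simp: D1)
  also have "\<dots> = (\<Sum>j<rk S k. d1 i j)" by (rule rk_reindex)
  finally show ?thesis .
qed

lemma r2: "i2 < n2 \<Longrightarrow> k \<le> N \<Longrightarrow> (\<Sum>j<k. DD (n1+i2) j) = (\<Sum>j<rk (-S) k. d2 i2 j)"
proof -
  assume a: "i2 < n2" "k \<le> N"
  have "(\<Sum>j<k. DD (n1+i2) j) = (\<Sum>j<k. if j \<in> -S then d2 i2 (rk (-S) j) else 0)"
    using a by (intro sum.cong) (auto simp: D2)
  also have "\<dots> = (\<Sum>j<rk (-S) k. d2 i2 j)" by (rule rk_reindex)
  finally show ?thesis .
qed

lemma c1: "i \<le> n1 \<Longrightarrow> k < N \<Longrightarrow> (\<Sum>i'<i. DD i' k) = (if k \<in> S then (\<Sum>i'<i. d1 i' (rk S k)) else 0)"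
proof -
  assume a: "i \<le> n1" "k < N"
  have "(\<Sum>i'<i. DD i' k) = (\<Sum>i'<i. if k \<in> S then d1 i' (rk S k) else 0)"
    using a by (intro sum.cong) (auto simp: D1)
  then show ?thesis by (cases "k \<in> S") simp_all
qed

lemma c2: "i2 \<le> n2 \<Longrightarrow> k < N \<Longrightarrow> (\<Sum>i'<n1+i2. DD i' k) = (if k \<in> S then 1 else (\<Sum>t<i2. d2 t (rk (-S) k)))"
proof -
  assume a: "i2 \<le> n2" "k < N"
  have "(\<Sum>i'<n1+i2. DD i' k) = (\<Sum>i'<n1. DD i' k) + (\<Sum>t<i2. DD (n1+t) k)"
    by (rule sum_split_add)
  also have "(\<Sum>t<i2. DD (n1+t) k) = (\<Sum>t<i2. if k \<in> S then 0 else d2 t (rk (-S) k))"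
    using a by (intro sum.cong) (auto simp: D2)
  also have "(\<Sum>i'<n1. DD i' k) = (if k \<in> S then (\<Sum>i'<n1. d1 i' (rk S k)) else 0)"
    using c1[of n1 k] a by simp
  finally show ?thesis using col_full[OF A1 rkS_lt] by (cases "k \<in> S") simp_all
qed

lemma ind1: "i < n1 \<Longrightarrow> k < N \<Longrightarrow>
   ind s DD i k = (if k \<in> S then ind s d1 i (rk S k) else E1 s (\<Sum>j<rk S k. d1 i j))"
proof -
  assume a: "i < n1" "k < N"
  have r: "(\<Sum>j<k. DD i j) = (\<Sum>j<rk S k. d1 i j)" using r1 a by simp
  have c: "(\<Sum>i'<i. DD i' k) = (if k \<in> S then (\<Sum>i'<i. d1 i' (rk S k)) else 0)" using c1 a by simp
  show ?thesis
  proof (cases "k \<in> S")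
    case True
    then show ?thesis using a r c by (simp add: ind_def vt_eq D1)
  next
    case False
    have "(\<Sum>j<rk S k. d1 i j) \<in> {0,1}" by (rule row_partial[OF A1])
    then show ?thesis using False a r c by (auto simp: ind_def vt_eq D1 E1_def vt_def)
  qed
qed

lemma ind2: "i2 < n2 \<Longrightarrow> k < N \<Longrightarrow>
   ind s DD (n1+i2) k = (if k \<in> S then E2 s (\<Sum>j<rk (-S) k. d2 i2 j) else ind s d2 i2 (rk (-S) k))"
proof -
  assume a: "i2 < n2" "k < N"
  have r: "(\<Sum>j<k. DD (n1+i2) j) = (\<Sum>j<rk (-S) k. d2 i2 j)" using r2 a by simp
  have c: "(\<Sum>i'<n1+i2. DD i' k) = (if k \<in> S then 1 else (\<Sum>t<i2. d2 t (rk (-S) k)))" using c2 a by simp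
  show ?thesis
  proof (cases "k \<in> S")
    case False
    then show ?thesis using a r c by (simp add: ind_def vt_eq D2)
  next
    case True
    have "(\<Sum>j<rk (-S) k. d2 i2 j) \<in> {0,1}" by (rule row_partial[OF A2])
    then show ?thesis using True a r c by (auto simp: ind_def vt_eq D2 E2_def vt_def)
  qed
qed

lemma split_if_add: "(if c then a else b) = (if c then a else 0) + (if c then 0 else (b::nat))"
  by simp

lemma P1: "(\<Sum>i<n1. \<Sum>k<N. ind s DD i k) = (\<Sum>i<n1. \<Sum>j<n1. ind s d1 i j) + (\<Sum>k<N. if k \<in> S then 0 else X s n1 (rk S k))"
proof -
  have "(\<Sum>i<n1. \<Sum>k<N. ind s DD i k) = (\<Sum>i<n1. (\<Sum>k<N. if k \<in> S then ind s d1 i (rk S k) else 0) + (\<Sum>k<N. if k \<in> S then 0 else E1 s (\<Sum>j<rk S k. d1 i j)))"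
  proof (rule sum.cong[OF refl])
    fix i assume "i \<in> {..<n1}"
    then have i: "i < n1" by simp
    have "(\<Sum>k<N. ind s DD i k) = (\<Sum>k<N. (if k \<in> S then ind s d1 i (rk S k) else 0) + (if k \<in> S then 0 else E1 s (\<Sum>j<rk S k. d1 i j)))"
      by (rule sum.cong[OF refl]) (simp add: ind1 i)
    then show "(\<Sum>k<N. ind s DD i k) = (\<Sum>k<N. if k \<in> S then ind s d1 i (rk S k) else 0) + (\<Sum>k<N. if k \<in> S then 0 else E1 s (\<Sum>j<rk S k. d1 i j))"
      by (simp only: sum.distrib)
  qed
  also have "\<dots> = (\<Sum>i<n1. \<Sum>k<N. if k \<in> S then ind s d1 i (rk S k) else 0) + (\<Sum>i<n1. \<Sum>k<N. if k \<in> S then 0 else E1 s (\<Sum>j<rk S k. d1 i j))"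
    by (rule sum.distrib)
  also have "(\<Sum>i<n1. \<Sum>k<N. if k \<in> S then ind s d1 i (rk S k) else 0) = (\<Sum>i<n1. \<Sum>j<n1. ind s d1 i j)"
  proof (rule sum.cong[OF refl])
    fix i
    show "(\<Sum>k<N. if k \<in> S then ind s d1 i (rk S k) else 0) = (\<Sum>j<n1. ind s d1 i j)"
      using rk_reindex[where T=S and k=N and f="ind s d1 i"] rkSN by simp
  qed
  also have "(\<Sum>i<n1. \<Sum>k<N. if k \<in> S then 0 else E1 s (\<Sum>j<rk S k. d1 i j)) = (\<Sum>k<N. \<Sum>i<n1. if k \<in> S then 0 else E1 s (\<Sum>j<rk S k. d1 i j))"
    by (rule sum.swap)
  also have "\<dots> = (\<Sum>k<N. if k \<in> S then 0 else X s n1 (rk S k))"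
  proof (rule sum.cong[OF refl])
    fix k
    show "(\<Sum>i<n1. if k \<in> S then 0 else E1 s (\<Sum>j<rk S k. d1 i j)) = (if k \<in> S then 0 else X s n1 (rk S k))"
      using E1sum[OF A1 rkS_le, where k1=k and s=s] by (cases "k \<in> S") simp_all
  qed
  finally show ?thesis .
qed

lemma P2: "(\<Sum>i2<n2. \<Sum>k<N. ind s DD (n1+i2) k) = (\<Sum>k<N. if k \<in> S then Y s n2 (rk (-S) k) else 0) + (\<Sum>i<n2. \<Sum>j<n2. ind s d2 i j)"
proof -
  have "(\<Sum>i2<n2. \<Sum>k<N. ind s DD (n1+i2) k) = (\<Sum>i2<n2. (\<Sum>k<N. if k \<in> S then E2 s (\<Sum>j<rk (-S) k. d2 i2 j) else 0) + (\<Sum>k<N. if k \<in> -S then ind s d2 i2 (rk (-S) k) else 0))"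
  proof (rule sum.cong[OF refl])
    fix i2 assume "i2 \<in> {..<n2}"
    then have i: "i2 < n2" by simp
    have "(\<Sum>k<N. ind s DD (n1+i2) k) = (\<Sum>k<N. (if k \<in> S then E2 s (\<Sum>j<rk (-S) k. d2 i2 j) else 0) + (if k \<in> -S then ind s d2 i2 (rk (-S) k) else 0))"
      by (rule sum.cong[OF refl]) (simp add: ind2 i)
    then show "(\<Sum>k<N. ind s DD (n1+i2) k) = (\<Sum>k<N. if k \<in> S then E2 s (\<Sum>j<rk (-S) k. d2 i2 j) else 0) + (\<Sum>k<N. if k \<in> -S then ind s d2 i2 (rk (-S) k) else 0)"
      by (simp only: sum.distrib)
  qed
  also have "\<dots> = (\<Sum>i2<n2. \<Sum>k<N. if k \<in> S then E2 s (\<Sum>j<rk (-S) k. d2 i2 j) else 0) + (\<Sum>i2<n2. \<Sum>k<N. if k \<in> -S then ind s d2 i2 (rk (-S) k) else 0)"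
    by (rule sum.distrib)
  also have "(\<Sum>i2<n2. \<Sum>k<N. if k \<in> -S then ind s d2 i2 (rk (-S) k) else 0) = (\<Sum>i<n2. \<Sum>j<n2. ind s d2 i j)"
  proof (rule sum.cong[OF refl])
    fix i
    show "(\<Sum>k<N. if k \<in> -S then ind s d2 i (rk (-S) k) else 0) = (\<Sum>j<n2. ind s d2 i j)"
      using rk_reindex[where T="-S" and k=N and f="ind s d2 i"] rkCN by simp
  qed
  also have "(\<Sum>i2<n2. \<Sum>k<N. if k \<in> S then E2 s (\<Sum>j<rk (-S) k. d2 i2 j) else 0) = (\<Sum>k<N. \<Sum>i2<n2. if k \<in> S then E2 s (\<Sum>j<rk (-S) k. d2 i2 j) else 0)"
    by (rule sum.swap)
  also have "\<dots> = (\<Sum>k<N. if k \<in> S then Y s n2 (rk (-S) k) else 0)"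
  proof (rule sum.cong[OF refl])
    fix k assume "k \<in> {..<N}"
    then have k: "k \<le> N" by simp
    show "(\<Sum>i2<n2. if k \<in> S then E2 s (\<Sum>j<rk (-S) k. d2 i2 j) else 0) = (if k \<in> S then Y s n2 (rk (-S) k) else 0)"
      using E2sum[OF A2 rkC_le[OF k], of s] by (cases "k \<in> S") simp_all
  qed
  finally show ?thesis .
qed

lemma vcount_DD: "vcount s N DD = vcount s n1 d1 + vcount s n2 d2 + stat s n1 n2 S"
proof -
  have "vcount s N DD = (\<Sum>i<n1. \<Sum>k<N. ind s DD i k) + (\<Sum>i2<n2. \<Sum>k<N. ind s DD (n1+i2) k)"
    unfolding vcount_sum by (rule sum_split_add)
  also have "\<dots> = vcount s n1 d1 + vcount s n2 d2 +
      ((\<Sum>k<N. if k \<in> S then 0 else X s n1 (rk S k)) + (\<Sum>k<N. if k \<in> S then Y s n2 (rk (-S) k) else 0))"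
    unfolding P1 P2 vcount_sum by simp
  also have "(\<Sum>k<N. if k \<in> S then 0 else X s n1 (rk S k)) + (\<Sum>k<N. if k \<in> S then Y s n2 (rk (-S) k) else 0) = stat s n1 n2 S"
    unfolding stat_def sum.distrib[symmetric] by (rule sum.cong) auto
  finally show ?thesis .
qed

lemma DD_row: "i < N \<Longrightarrow> alt_signs (filter (\<lambda>x. x \<noteq> 0) (map (\<lambda>j. DD i j) [0..<N]))"
proof -
  assume iN: "i < N"
  show ?thesis
  proof (cases "i < n1")
    case True
    have "filter (\<lambda>x. x \<noteq> 0) (map (DD i) [0..<N]) = filter (\<lambda>x. x \<noteq> 0) (map (DD i) (filter (\<lambda>x. x \<in> S) [0..<N]))"
      using True by (intro filter_zero_out) (auto simp: shD_def)
    also have "map (DD i) (filter (\<lambda>x. x \<in> S) [0..<N]) = map (d1 i) (map (rk S) (filter (\<lambda>x. x \<in> S) [0..<N]))"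
      unfolding map_map using True iN by (intro map_cong[OF refl]) (auto simp: shD_def)
    also have "\<dots> = map (d1 i) [0..<n1]" by (simp only: rk_map rkSN)
    finally show ?thesis using asm_rows[OF A1 True] by simp
  next
    case False
    then obtain i2 where i2: "i = n1 + i2" "i2 < n2" using iN by (metis add_less_cancel_left le_add_diff_inverse not_less)
    have "filter (\<lambda>x. x \<noteq> 0) (map (DD i) [0..<N]) = filter (\<lambda>x. x \<noteq> 0) (map (DD i) (filter (\<lambda>x. x \<in> -S) [0..<N]))"
      by (rule filter_zero_out) (auto simp: shD_def i2)
    also have "map (DD i) (filter (\<lambda>x. x \<in> -S) [0..<N]) = map (d2 i2) (map (rk (-S)) (filter (\<lambda>x. x \<in> -S) [0..<N]))"
      unfolding map_map by (rule map_cong[OF refl]) (auto simp: shD_def i2)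
    also have "\<dots> = map (d2 i2) [0..<n2]" by (simp only: rk_map rkCN)
    finally show ?thesis using asm_rows[OF A2 i2(2)] by simp
  qed
qed

lemma zero_filter: "(\<forall>x\<in>set xs. f x = (0::int)) \<Longrightarrow> filter (\<lambda>x. x \<noteq> 0) (map f xs) = []"
  by (induction xs) auto

lemma DD_col: "k < N \<Longrightarrow> alt_signs (filter (\<lambda>x. x \<noteq> 0) (map (\<lambda>i. DD i k) [0..<N]))"
proof -
  assume kN: "k < N"
  have sp: "[0..<N] = [0..<n1] @ [n1..<n1+n2]" using upt_add_eq_append[of 0 n1 n2] by simp
  have sh: "map (\<lambda>i. DD i k) [n1..<n1+n2] = map (\<lambda>t. DD (n1+t) k) [0..<n2]"
    by (rule nth_equalityI) auto
  have m: "map (\<lambda>i. DD i k) [0..<N] = map (\<lambda>i. DD i k) [0..<n1] @ map (\<lambda>t. DD (n1+t) k) [0..<n2]"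
    by (simp only: sp map_append sh)
  show ?thesis
  proof (cases "k \<in> S")
    case True
    have a: "map (\<lambda>i. DD i k) [0..<n1] = map (\<lambda>i. d1 i (rk S k)) [0..<n1]"
      by (rule map_cong[OF refl]) (simp add: D1 kN True)
    have b: "filter (\<lambda>x. x \<noteq> 0) (map (\<lambda>t. DD (n1+t) k) [0..<n2]) = []"
      by (rule zero_filter) (simp add: D2 kN True)
    show ?thesis unfolding m filter_append a b using asm_cols[OF A1 rkS_lt[OF True]] by simp
  next
    case False
    have a: "map (\<lambda>t. DD (n1+t) k) [0..<n2] = map (\<lambda>t. d2 t (rk (-S) k)) [0..<n2]"
      by (rule map_cong[OF refl]) (simp add: D2 kN False)
    have b: "filter (\<lambda>x. x \<noteq> 0) (map (\<lambda>i. DD i k) [0..<n1]) = []"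
      by (rule zero_filter) (simp add: D1 kN False)
    show ?thesis unfolding m filter_append a b using asm_cols[OF A2 rkC_lt[OF kN False]] by simp
  qed
qed

lemma DD_asm: "is_asm N DD"
  unfolding is_asm_def
proof (intro conjI allI impI)
  fix i k
  show "DD i k \<in> {-1, 0, 1}"
    using asm_vals[OF A1, of i "rk S k"] asm_vals[OF A2, of "i-n1" "rk (-S) k"] by (simp add: shD_def)
next
  fix i k :: nat assume "\<not> (i < N \<and> k < N)"
  then show "DD i k = 0" by (auto simp: shD_def)
next
  fix i assume "i < N" then show "alt_signs (filter (\<lambda>x. x \<noteq> 0) (map (\<lambda>j. DD i j) [0..<N]))" by (rule DD_row)
next
  fix k assume "k < N" then show "alt_signs (filter (\<lambda>x. x \<noteq> 0) (map (\<lambda>i. DD i k) [0..<N]))" by (rule DD_col)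
qed

lemma DD_supp: "supp N DD = shuffle_mat n1 n2 S (supp n1 d1) (supp n2 d2)"
proof (intro ext)
  fix i k
  have cS: "card {x\<in>S. x < k} = rk S k" by (simp add: rk_def)
  have cC: "card {x. x < k \<and> x \<notin> S} = rk (-S) k"
    unfolding rk_def by (rule arg_cong[where f=card]) auto
  show "supp N DD i k = shuffle_mat n1 n2 S (supp n1 d1) (supp n2 d2) i k"
  proof (cases "i < N \<and> k < N")
    case False then show ?thesis by (auto simp: supp_def shuffle_mat_def shD_def)
  next
    case True
    show ?thesis
    proof (cases "k \<in> S")
      case kS: True
      have r: "rk S k < n1" by (rule rkS_lt[OF kS])
      show ?thesis using True kS r by (auto simp: supp_def shuffle_mat_def shD_def cS)
    next
      case kS: False
      have r: "rk (-S) k < n2" using rkC_lt kS True by blast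
      show ?thesis using True kS r by (auto simp: supp_def shuffle_mat_def shD_def cC)
    qed
  qed
qed


lemma phi_shuffle: "(phi s N (shuffle_mat n1 n2 S (supp n1 d1) (supp n2 d2)) :: 'k::field_char_0 poly fract)
   = qvar ^ (vcount s n1 d1 + vcount s n2 d2) * qvar ^ stat s n1 n2 S / qfact N"
  unfolding phi_def DD_supp[symmetric] asm_of_supp[OF DD_asm] vcount_DD by (simp add: power_add)

end

theorem proposition4p4:
  fixes s :: vtype
  shows "(phi s 0 empty_mat :: 'k::field_char_0 poly fract) = 1 \<and>
    (\<forall>n1 n2 d1 d2. is_asm n1 d1 \<longrightarrow> is_asm n2 d2 \<longrightarrow>
      (\<Sum>S\<in>shuffle_sets n1 n2. phi s (n1 + n2) (shuffle_mat n1 n2 S (supp n1 d1) (supp n2 d2)))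
        = (phi s n1 (supp n1 d1) :: 'k poly fract) * phi s n2 (supp n2 d2))"
proof (intro conjI allI impI)
  show "(phi s 0 empty_mat :: 'k::field_char_0 poly fract) = 1"
    by (simp add: phi_def vcount_def qfact_def)
next
  fix n1 n2 :: nat and d1 d2 :: "nat \<Rightarrow> nat \<Rightarrow> int"
  assume A1: "is_asm n1 d1" and A2: "is_asm n2 d2"
  define v where "v = vcount s n1 d1 + vcount s n2 d2"
  have "(\<Sum>S\<in>shuffle_sets n1 n2. (phi s (n1 + n2) (shuffle_mat n1 n2 S (supp n1 d1) (supp n2 d2)) :: 'k poly fract))
      = (\<Sum>S\<in>shuffle_sets n1 n2. qvar ^ v * qvar ^ stat s n1 n2 S / qfact (n1+n2))"
    unfolding v_def by (rule sum.cong[OF refl]) (rule phi_shuffle[OF _ A1 A2])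
  also have "\<dots> = qvar ^ v * gsum s n1 n2 / qfact (n1+n2)"
    by (simp add: gsum_def sum_divide_distrib sum_distrib_left)
  also have "gsum s n1 n2 = (qfact (n1+n2) / (qfact n1 * qfact n2) :: 'k poly fract)"
  proof -
    have e: "gsum s n1 n2 * (qfact n1 * qfact n2) = (qfact (n1+n2) :: 'k poly fract)"
      using gsum_formula[of s n1 n2] by (simp only: mult.assoc)
    have nz: "(qfact n1 * qfact n2 :: 'k poly fract) \<noteq> 0" using qfact_nz[of n1] qfact_nz[of n2] by simp
    show ?thesis using e nz by (simp add: eq_divide_eq)
  qed
  also have "(qvar :: 'k poly fract) ^ v * (qfact (n1 + n2) / (qfact n1 * qfact n2)) / qfact (n1 + n2)
      = (qvar ^ vcount s n1 d1 / qfact n1) * (qvar ^ vcount s n2 d2 / qfact n2)"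
  proof -
    have "(qfact (n1+n2) :: 'k poly fract) \<noteq> 0" "(qfact n1 :: 'k poly fract) \<noteq> 0" "(qfact n2 :: 'k poly fract) \<noteq> 0"
      by (simp_all add: qfact_nz)
    then show ?thesis by (simp add: v_def power_add field_simps)
  qed
  also have "\<dots> = phi s n1 (supp n1 d1) * phi s n2 (supp n2 d2)"
    by (simp add: phi_def asm_of_supp[OF A1] asm_of_supp[OF A2])
  finally show "(\<Sum>S\<in>shuffle_sets n1 n2. phi s (n1 + n2) (shuffle_mat n1 n2 S (supp n1 d1) (supp n2 d2)))
        = (phi s n1 (supp n1 d1) :: 'k poly fract) * phi s n2 (supp n2 d2)" .
qed

end
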